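(* Let $\tau=[0;\overline{b_1,b_2,\dots,b_s}]$ be a quadratic power series whose shortest periodic part is $b_1,\dots,b_s$. Let $f=[a_0;a_1,a_2,\dots]\in\widehat K\setminus(K\cup\Theta_\tau)$. For a positive integer $r$ with $a_r\ne b_s$, set $\alpha_r=[a_0;a_1,\dots,a_r,\overline{b_1,\dots,b_{s-1},b_s}]$, and write $\rho_r=\frac{|f-\alpha_r|}{|\alpha_r-\alpha_r^\sigma|}$. (i) If $a_{r+1}\ne b_1$, then $-\log_q\rho_r=\deg a_r+\deg b_s-\deg(a_r-b_s)+\deg a_{r+1}+\deg b_1-\deg(a_{r+1}-b_1).$ (ii) If $a_{r+1}=b_1$, let $t$ be the largest integer such that the word $a_{r+1}\cdots a_{r+t}$ coincides with the prefix of length $t$ of the infinite word $(b_1\cdots b_s)^\infty$; let $s_0\in\{1,\dots,s\}$ be such that $a_{r+t}=b_{s_0}$ is the $t$-th letter of this infinite word (i.e. $s_0\equiv t \bmod s$), and put $s'=s_0+1$ if $s_0<s$ and $s'=1$ otherwise. Then $-\log_q\rho_r=2\sum_{j=1}^t\deg a_{r+j}+\deg a_r+\deg b_s-\deg(a_r-b_s)+\deg a_{r+t+1}+\deg b_{s'}-\deg(a_{r+t+1}-b_{s'}).$ In particular, in both cases $\rho_r\le q^{-2}$. Furthermore, putting $t=0$ and $s'=1$ when $a_{r+1}\ne b_1$: if $\deg a_r\ne\deg b_s$ and $\deg a_{r+t+1}\ne\deg b_{s'}$, then $-\log_q\rho_r=2\sum_{j=1}^t\deg a_{r+j}+\min\{\deg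 a_r,\deg b_s\}+\min\{\deg a_{r+t+1},\deg b_{s'}\}.$
   Context: $q$ is a positive power of a prime, $R=\mathbb F_q[Y]$, $K=\mathbb F_q(Y)$, $\widehat K=\mathbb F_q((Y^{-1}))$ with absolute value $|P/Q|=q^{\deg P-\deg Q}$ extended to $\widehat K$ (the paper writes $\mathrm v(x)=-\log x/\log q$ for the corresponding valuation). $[a_0;a_1,a_2,\dots]$ denotes the continued fraction $a_0+1/(a_1+1/(a_2+\cdots))$ with $a_0\in R$ and $a_i$ ($i\ge1$) nonconstant polynomials; an overline indicates a block repeated infinitely often. For a quadratic power series $\gamma$, $\gamma^\sigma$ is its Galois conjugate over $K$, and $\Theta_\gamma=\mathrm{PGL}_2(R)\cdot\{\gamma,\gamma^\sigma\}$ under the action by homographies on $\widehat K\cup\{\infty\}$. *)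

theory Defs
  imports Complex_Main "HOL-Library.Cardinality" "HOL-Computational_Algebra.Polynomial" "HOL-Computational_Algebra.Formal_Laurent_Series"
begin

text \<open>Model: the completion F_q((Y^-1)) is the type of formal Laurent series 'a fls in the
variable X = Y^-1 (finitely many negative powers of X), over a finite field 'a with q = CARD('a).
The polynomial variable Y is fls_X_inv.  The valuation v is fls_subdegree and the topology is
the library metric on fls (which induces the Y^-1-adic topology).\<close>

definition emb :: "'a::field poly \<Rightarrow> 'a fls" where
  "emb p = (\<Sum>i\<le>degree p. fls_const (coeff p i) * fls_X_inv ^ i)"

definition absv :: "'a::{finite,field} fls \<Rightarrow> real" where
  "absv x = (if x = 0 then 0 else real (CARD('a)) powr (- of_int (fls_subdegree x)))"

definition in_K :: "'a::field fls \<Rightarrow> bool" where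
  "in_K x \<longleftrightarrow> (\<exists>P Q. Q \<noteq> 0 \<and> x = emb P / emb Q)"

primrec cf_fin :: "(nat \<Rightarrow> 'a::field poly) \<Rightarrow> nat \<Rightarrow> 'a fls" where
  "cf_fin a 0 = emb (a 0)"
| "cf_fin a (Suc n) = emb (a 0) + 1 / cf_fin (\<lambda>i. a (Suc i)) n"

definition cf_value :: "(nat \<Rightarrow> 'a::field poly) \<Rightarrow> 'a fls" where
  "cf_value a = lim (cf_fin a)"

definition cf_admissible :: "(nat \<Rightarrow> 'a::field poly) \<Rightarrow> bool" where
  "cf_admissible a \<longleftrightarrow> (\<forall>i\<ge>1. degree (a i) \<ge> 1)"

text \<open>The infinite word (b_1 ... b_s)^infty, indexed from 1; position 0 holds 0.\<close>
definition per_word :: "(nat \<Rightarrow> 'a::zero) \<Rightarrow> nat \<Rightarrow> nat \<Rightarrow> 'a" where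
  "per_word b s n = (if n = 0 then 0 else b (((n - 1) mod s) + 1))"

definition alpha_seq :: "(nat \<Rightarrow> 'a::zero) \<Rightarrow> (nat \<Rightarrow> 'a) \<Rightarrow> nat \<Rightarrow> nat \<Rightarrow> nat \<Rightarrow> 'a" where
  "alpha_seq a b s r n = (if n \<le> r then a n else b (((n - r - 1) mod s) + 1))"

definition shortest_period :: "(nat \<Rightarrow> 'a) \<Rightarrow> nat \<Rightarrow> bool" where
  "shortest_period b s \<longleftrightarrow> s \<ge> 1 \<and>
     (\<forall>s'. 0 < s' \<and> s' < s \<longrightarrow>
        \<not> (\<forall>n\<ge>1. b (((n + s' - 1) mod s) + 1) = b (((n - 1) mod s) + 1)))"

definition quadratic :: "'a::field fls \<Rightarrow> bool" where
  "quadratic x \<longleftrightarrow> \<not> in_K x \<and>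
     (\<exists>A B C. A \<noteq> 0 \<and> emb A * x ^ 2 + emb B * x + emb C = 0)"

definition galois_conj :: "'a::field fls \<Rightarrow> 'a fls" where
  "galois_conj x = (SOME y. \<exists>A B C. A \<noteq> 0 \<and> emb A * x ^ 2 + emb B * x + emb C = 0
                              \<and> y = - emb B / emb A - x)"

text \<open>Theta_gamma = PGL_2(R) . {gamma, gamma^sigma}, intersected with K-hat (the point at
infinity and rational points never matter here since they are only hit from rational points).\<close>
definition Theta :: "'a::field fls \<Rightarrow> 'a fls set" where
  "Theta g = {(emb a * x + emb b) / (emb c * x + emb d) | a b c d x.
               a * d - b * c \<noteq> 0 \<and> degree (a * d - b * c) = 0 \<and>
               (x = g \<or> x = galois_conj g) \<and> emb c * x + emb d \<noteq> 0}"

definition prefix_match :: "(nat \<Rightarrow> 'a::zero) \<Rightarrow> (nat \<Rightarrow> 'a) \<Rightarrow> nat \<Rightarrow> nat \<Rightarrow> nat \<Rightarrow> bool" where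
  "prefix_match a b s r t \<longleftrightarrow> (\<forall>j\<in>{1..t}. a (r + j) = per_word b s j)"

definition largest_match :: "(nat \<Rightarrow> 'a::zero) \<Rightarrow> (nat \<Rightarrow> 'a) \<Rightarrow> nat \<Rightarrow> nat \<Rightarrow> nat \<Rightarrow> bool" where
  "largest_match a b s r t \<longleftrightarrow> prefix_match a b s r t \<and> (\<forall>t'. prefix_match a b s r t' \<longrightarrow> t' \<le> t)"

definition s0_of :: "nat \<Rightarrow> nat \<Rightarrow> nat" where
  "s0_of s t = (if t mod s = 0 then s else t mod s)"

definition s'_of :: "nat \<Rightarrow> nat \<Rightarrow> nat" where
  "s'_of s t = (if s0_of s t < s then s0_of s t + 1 else 1)"

end

theory Submission
  imports Defs
begin
unbundle fps_syntax

lemma emb_nth: "emb p $$ k = (if k \<le> 0 then coeff p (nat (-k)) else 0)"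
proof -
  have "emb p $$ k = (\<Sum>i\<le>degree p. coeff p i * (if k = - int i then 1 else 0))"
    unfolding emb_def fls_nth_sum by (simp add: fls_X_inv_power_nth)
  also have "\<dots> = (\<Sum>i\<in>{..degree p} \<inter> {nat (-k)}. if k \<le> 0 then coeff p i else 0)"
    by (rule sum.mono_neutral_cong_right) (auto split: if_splits)
  also have "\<dots> = (if k \<le> 0 then coeff p (nat (-k)) else 0)"
    by (cases "nat (-k) \<le> degree p") (auto simp: coeff_eq_0)
  finally show ?thesis .
qed

lemma emb_add [simp]: "emb (p + q) = emb p + emb q"
  by (rule fls_eqI) (simp add: emb_nth)
lemma emb_minus [simp]: "emb (p - q) = emb p - emb q"
  by (rule fls_eqI) (simp add: emb_nth)
lemma emb_uminus [simp]: "emb (- p) = - emb p"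
  by (rule fls_eqI) (simp add: emb_nth)
lemma emb_0 [simp]: "emb 0 = 0"
  by (rule fls_eqI) (simp add: emb_nth)
lemma emb_1 [simp]: "emb 1 = 1"
  by (rule fls_eqI) (auto simp add: emb_nth)
lemma emb_smult: "emb (smult c p) = fls_const c * emb p"
  by (rule fls_eqI) (simp add: emb_nth)
lemma emb_pCons: "emb (pCons c p) = fls_const c + fls_X_inv * emb p"
proof (rule fls_eqI)
  fix k
  show "emb (pCons c p) $$ k = (fls_const c + fls_X_inv * emb p) $$ k"
    unfolding fls_X_inv_times_conv_shift
    by (cases "k < 0") (auto simp add: emb_nth coeff_pCons nat_add_distrib nat_diff_distrib split: nat.split)
qed
lemma emb_mult [simp]: "emb (p * q) = emb p * emb q"
proof (induction p)
  case 0 then show ?case by simp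
next
  case (pCons c p)
  show ?case by (simp add: emb_pCons emb_smult pCons.IH algebra_simps)
qed
lemma emb_eq_0_iff [simp]: "emb p = 0 \<longleftrightarrow> p = 0"
proof
  assume "emb p = 0"
  hence "\<forall>n. coeff p n = 0"
    using emb_nth[of p "- int n" for n] by (metis fls_zero_nth nat_int neg_0_le_iff_le of_nat_0_le_iff minus_minus)
  thus "p = 0" by (simp add: poly_eq_iff)
qed simp
lemma emb_subdegree [simp]: "fls_subdegree (emb p) = - int (degree p)"
proof (cases "p = 0")
  case True then show ?thesis by simp
next
  case False
  show ?thesis
  proof (rule fls_subdegree_eqI)
    show "emb p $$ (- int (degree p)) \<noteq> 0" using False by (simp add: emb_nth)
    fix k assume "k < - int (degree p)"
    then show "emb p $$ k = 0" by (simp add: emb_nth coeff_eq_0)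
  qed
qed
lemma emb_inj: "emb p = emb q \<longleftrightarrow> p = q"
  using emb_eq_0_iff[of "p - q"] by (auto simp del: emb_eq_0_iff)

lemma emb_numeral [simp]: "emb (numeral k) = numeral k"
  by (induct k rule: num_induct) (simp_all add: numeral_inc del: numeral_plus_one)

section \<open>Valuation toolkit\<close>

lemma v_add:
  fixes x y :: "'a::field fls"
  assumes "x \<noteq> 0" "y = 0 \<or> fls_subdegree x < fls_subdegree y"
  shows "x + y \<noteq> 0 \<and> fls_subdegree (x + y) = fls_subdegree x"
proof (cases "y = 0")
  case True then show ?thesis using assms by simp
next
  case False
  then have lt: "fls_subdegree x < fls_subdegree y" using assms by simp
  have "(x + y) $$ fls_subdegree x \<noteq> 0"
    using lt assms(1) by (simp add: nth_fls_subdegree_zero_iff)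
  then have "x + y \<noteq> 0" using fls_nonzeroI by blast
  moreover have "fls_subdegree (x + y) = fls_subdegree x"
    using fls_subdegree_add_eq1[OF assms(1) lt] .
  ultimately show ?thesis by simp
qed

lemma v_inv:
  fixes x :: "'a::field fls"
  shows "fls_subdegree (1 / x) = - fls_subdegree x"
  by (simp add: divide_inverse)

lemma v_inv_nz:
  fixes x :: "'a::field fls"
  shows "x \<noteq> 0 \<Longrightarrow> 1 / x \<noteq> 0"
  by simp

lemma v_mult:
  fixes x y :: "'a::field fls"
  shows "x \<noteq> 0 \<Longrightarrow> y \<noteq> 0 \<Longrightarrow> fls_subdegree (x * y) = fls_subdegree x + fls_subdegree y"
  by simp

lemma v_invdiff:
  fixes x y :: "'a::field fls"
  assumes "x \<noteq> 0" "y \<noteq> 0" "x \<noteq> y"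
  shows "1 / x - 1 / y \<noteq> 0 \<and>
    fls_subdegree (1 / x - 1 / y) = fls_subdegree (x - y) - fls_subdegree x - fls_subdegree y"
proof -
  have eq: "1 / x - 1 / y = (y - x) / (x * y)" using assms by (simp add: field_simps)
  have "y - x \<noteq> 0" using assms by simp
  moreover have "x * y \<noteq> 0" using assms by simp
  ultimately show ?thesis
    unfolding eq using assms
    by (simp add: fls_divide_subdegree fls_subdegree_minus_sym)
qed

lemma v_embE:
  fixes d :: "'a::field poly" and e :: "'a fls"
  assumes "d \<noteq> 0" "e = 0 \<or> fls_subdegree e > 0"
  shows "emb d + e \<noteq> 0 \<and> fls_subdegree (emb d + e) = - int (degree d)"
  using v_add[of "emb d" e] assms by auto

section \<open>Finite continued fractions with a tail\<close>

primrec cft :: "(nat \<Rightarrow> 'a::field poly) \<Rightarrow> nat \<Rightarrow> 'a fls \<Rightarrow> 'a fls" where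
  "cft c 0 w = emb (c 0) + 1 / w"
| "cft c (Suc n) w = emb (c 0) + 1 / cft (\<lambda>i. c (Suc i)) n w"

primrec good :: "(nat \<Rightarrow> 'a::field poly) \<Rightarrow> nat \<Rightarrow> 'a fls \<Rightarrow> bool" where
  "good c 0 w = (w \<noteq> 0)"
| "good c (Suc n) w = (good (\<lambda>i. c (Suc i)) n w \<and> cft (\<lambda>i. c (Suc i)) n w \<noteq> 0)"

lemma cft_cong: "(\<And>i. i \<le> n \<Longrightarrow> c i = c' i) \<Longrightarrow> cft c n w = cft c' n w"
proof (induction n arbitrary: c c')
  case 0 then show ?case by simp
next
  case (Suc n)
  have "cft (\<lambda>i. c (Suc i)) n w = cft (\<lambda>i. c' (Suc i)) n w"
    by (rule Suc.IH) (use Suc.prems in auto)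
  then show ?case using Suc.prems[of 0] by simp
qed

lemma cft_snoc: "cft c (Suc n) w = cft c n (emb (c (Suc n)) + 1 / w)"
  by (induction n arbitrary: c) simp_all

lemma good_snoc: "w \<noteq> 0 \<Longrightarrow> good c n (emb (c (Suc n)) + 1 / w) \<Longrightarrow> good c (Suc n) w"
proof (induction n arbitrary: c)
  case 0 then show ?case by simp
next
  case (Suc n)
  have "good (\<lambda>i. c (Suc i)) (Suc n) w"
    using Suc.IH[of "\<lambda>i. c (Suc i)"] Suc.prems by simp
  moreover have "cft (\<lambda>i. c (Suc i)) (Suc n) w \<noteq> 0"
    using Suc.prems by (simp only: cft_snoc) simp
  ultimately show ?case by simp
qed

lemma cft_val:
  assumes "\<forall>i\<le>n. 1 \<le> degree (c i)" "w \<noteq> 0" "fls_subdegree w \<le> 0"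
  shows "good c n w \<and> cft c n w \<noteq> 0 \<and> fls_subdegree (cft c n w) = - int (degree (c 0))"
  using assms
proof (induction n arbitrary: c)
  case 0
  have "c 0 \<noteq> 0" using 0 by auto
  moreover have "1 / w = 0 \<or> fls_subdegree (1 / w) > - int (degree (c 0))"
    using 0 by (auto simp: v_inv)
  ultimately show ?case using v_add[of "emb (c 0)" "1 / w"] 0 by simp
next
  case (Suc n)
  have IH: "good (\<lambda>i. c (Suc i)) n w \<and> cft (\<lambda>i. c (Suc i)) n w \<noteq> 0 \<and>
      fls_subdegree (cft (\<lambda>i. c (Suc i)) n w) = - int (degree (c 1))"
    using Suc.IH[of "\<lambda>i. c (Suc i)"] Suc.prems by auto
  have "c 0 \<noteq> 0" using Suc.prems by (metis degree_0 le_zero_eq not_one_le_zero zero_le)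
  moreover have "degree (c 1) \<ge> 1" "degree (c 0) \<ge> 1" using Suc.prems by auto
  ultimately show ?case using IH v_add[of "emb (c 0)" "1 / cft (\<lambda>i. c (Suc i)) n w"] by (simp add: v_inv)
qed

lemma sum_Suc_shift:
  "(\<Sum>i = 1..Suc n. f i) = f 1 + (\<Sum>i = 1..n. f (Suc i))" for f :: "nat \<Rightarrow> int"
proof -
  have "(\<Sum>i = 1..Suc n. f i) = f 1 + (\<Sum>i = Suc 1..Suc n. f i)"
    by (rule sum.atLeast_Suc_atMost) simp
  also have "(\<Sum>i = Suc 1..Suc n. f i) = (\<Sum>i = 1..n. f (Suc i))"
    by (rule sum.shift_bounds_cl_Suc_ivl)
  finally show ?thesis .
qed

lemma cft_diff:
  assumes "\<forall>i. 1 \<le> i \<longrightarrow> i \<le> n \<longrightarrow> 1 \<le> degree (c i)"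
    and "u \<noteq> 0" "u' \<noteq> 0" "fls_subdegree u \<le> 0" "fls_subdegree u' \<le> 0" "u \<noteq> u'"
  shows "cft c n u - cft c n u' \<noteq> 0 \<and>
    fls_subdegree (cft c n u - cft c n u') = fls_subdegree (u - u') - fls_subdegree u - fls_subdegree u'
      + 2 * (\<Sum>i = 1..n. int (degree (c i)))"
  using assms
proof (induction n arbitrary: c)
  case 0
  then show ?case using v_invdiff[of u u'] by simp
next
  case (Suc n)
  define d where "d = (\<lambda>i. c (Suc i))"
  have IH: "cft d n u - cft d n u' \<noteq> 0 \<and>
    fls_subdegree (cft d n u - cft d n u') = fls_subdegree (u - u') - fls_subdegree u - fls_subdegree u'
      + 2 * (\<Sum>i = 1..n. int (degree (d i)))"
    using Suc.IH[of d] Suc.prems unfolding d_def by auto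
  have hd: "\<forall>i\<le>n. 1 \<le> degree (d i)" using Suc.prems unfolding d_def by auto
  have V1: "cft d n u \<noteq> 0 \<and> fls_subdegree (cft d n u) = - int (degree (d 0))"
    using cft_val[OF hd, of u] Suc.prems by auto
  have V2: "cft d n u' \<noteq> 0 \<and> fls_subdegree (cft d n u') = - int (degree (d 0))"
    using cft_val[OF hd, of u'] Suc.prems by auto
  have ne: "cft d n u \<noteq> cft d n u'" using IH by simp
  have e: "cft c (Suc n) u - cft c (Suc n) u' = 1 / cft d n u - 1 / cft d n u'"
    by (simp add: d_def)
  have S: "(\<Sum>i = 1..Suc n. int (degree (c i))) = int (degree (d 0)) + (\<Sum>i = 1..n. int (degree (d i)))"
    unfolding sum_Suc_shift d_def by simp
  show ?case
    unfolding e S using v_invdiff[of "cft d n u" "cft d n u'"] V1 V2 ne IH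
    by simp
qed

section \<open>Moebius representation\<close>

fun mob :: "(nat \<Rightarrow> 'a::field poly) \<Rightarrow> nat \<Rightarrow> 'a poly \<times> 'a poly \<times> 'a poly \<times> 'a poly" where
  "mob c 0 = (c 0, 1, 1, 0)"
| "mob c (Suc n) = (case mob (\<lambda>i. c (Suc i)) n of (P, Q, R, S) \<Rightarrow> (c 0 * P + R, c 0 * Q + S, P, Q))"

lemma mob_rep:
  assumes "good c n w" "mob c n = (P, Q, R, S)"
  shows "emb R * w + emb S \<noteq> 0 \<and> cft c n w = (emb P * w + emb Q) / (emb R * w + emb S)
     \<and> (P * S - Q * R = 1 \<or> P * S - Q * R = -1)"
  using assms
proof (induction n arbitrary: c P Q R S)
  case 0
  then show ?case by (auto simp: field_simps)
next
  case (Suc n)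
  obtain P' Q' R' S' where m: "mob (\<lambda>i. c (Suc i)) n = (P', Q', R', S')"
    by (metis prod_cases4)
  have PQ: "P = c 0 * P' + R'" "Q = c 0 * Q' + S'" "R = P'" "S = Q'"
    using Suc.prems(2) m by auto
  have g: "good (\<lambda>i. c (Suc i)) n w" "cft (\<lambda>i. c (Suc i)) n w \<noteq> 0" using Suc.prems by auto
  have IH: "emb R' * w + emb S' \<noteq> 0 \<and> cft (\<lambda>i. c (Suc i)) n w = (emb P' * w + emb Q') / (emb R' * w + emb S')
     \<and> (P' * S' - Q' * R' = 1 \<or> P' * S' - Q' * R' = -1)"
    using Suc.IH[OF g(1) m] .
  have nz: "emb P' * w + emb Q' \<noteq> 0" using IH g(2) by auto
  have "cft c (Suc n) w = emb (c 0) + (emb R' * w + emb S') / (emb P' * w + emb Q')"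
    using IH by simp
  also have "\<dots> = (emb P * w + emb Q) / (emb R * w + emb S)"
    using nz IH unfolding PQ by (simp add: field_simps)
  finally have 1: "cft c (Suc n) w = (emb P * w + emb Q) / (emb R * w + emb S)" .
  have "P * S - Q * R = - (P' * S' - Q' * R')" unfolding PQ by (simp add: algebra_simps)
  then have "P * S - Q * R = 1 \<or> P * S - Q * R = -1" using IH by (metis minus_minus)
  then show ?case using 1 nz PQ by simp
qed

section \<open>Common quadratic equations\<close>

definition cq :: "'a::field fls \<Rightarrow> 'a fls \<Rightarrow> bool" where
  "cq u u' \<longleftrightarrow> (\<exists>A B C. (A \<noteq> 0 \<or> B \<noteq> 0 \<or> C \<noteq> 0) \<and>
      emb A * u ^ 2 + emb B * u + emb C = 0 \<and> emb A * u' ^ 2 + emb B * u' + emb C = 0)"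

lemma quad_step:
  fixes u :: "'a::field fls"
  assumes "u \<noteq> 0" "emb A * u ^ 2 + emb B * u + emb C = 0"
  shows "emb C * (emb c + 1 / u) ^ 2 + emb (B - c * C - c * C) * (emb c + 1 / u)
           + emb (A - B * c + C * c * c) = 0"
proof -
  have "emb C * (emb c + 1 / u) ^ 2 + emb (B - c * C - c * C) * (emb c + 1 / u)
           + emb (A - B * c + C * c * c) = (emb A * u ^ 2 + emb B * u + emb C) / u ^ 2"
    using assms(1) by (simp add: field_simps power2_eq_square)
  then show ?thesis using assms(2) by simp
qed

lemma cq_step:
  assumes "cq u u'" "u \<noteq> 0" "u' \<noteq> 0"
  shows "cq (emb c + 1 / u) (emb c + 1 / u')"
proof -
  obtain A B C where h: "A \<noteq> 0 \<or> B \<noteq> 0 \<or> C \<noteq> 0"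
      "emb A * u ^ 2 + emb B * u + emb C = 0" "emb A * u' ^ 2 + emb B * u' + emb C = 0"
    using assms(1) unfolding cq_def by blast
  have "C \<noteq> 0 \<or> B - c * C - c * C \<noteq> 0 \<or> A - B * c + C * c * c \<noteq> 0"
    using h(1) by auto
  then show ?thesis unfolding cq_def
    using quad_step[OF assms(2) h(2)] quad_step[OF assms(3) h(3)] by blast
qed

lemma cq_cft: "good c n u \<Longrightarrow> good c n u' \<Longrightarrow> cq u u' \<Longrightarrow> cq (cft c n u) (cft c n u')"
proof (induction n arbitrary: c)
  case 0 then show ?case using cq_step by simp
next
  case (Suc n)
  then show ?case using cq_step[of "cft (\<lambda>i. c (Suc i)) n u" "cft (\<lambda>i. c (Suc i)) n u'"] by simp
qed

lemma in_K_lin: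
  assumes "emb B * u + emb C = 0" "B \<noteq> 0"
  shows "in_K u"
proof -
  have "u = emb (- C) / emb B" using assms by (simp add: field_simps eq_neg_iff_add_eq_0)
  then show ?thesis unfolding in_K_def using assms(2) by blast
qed

lemma galois_conj_eq:
  assumes notK: "\<not> in_K u" and ne: "u \<noteq> u'" and cq: "cq u u'"
  shows "galois_conj u = u'"
proof -
  obtain A B C where h: "A \<noteq> 0 \<or> B \<noteq> 0 \<or> C \<noteq> 0"
      "emb A * u ^ 2 + emb B * u + emb C = 0" "emb A * u' ^ 2 + emb B * u' + emb C = 0"
    using cq unfolding cq_def by blast
  have A: "A \<noteq> 0"
  proof
    assume A0: "A = 0"
    show False
    proof (cases "B = 0")
      case True
      then have "C = 0" using h(2) A0 by simp
      then show False using h(1) A0 True by simp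
    next
      case False
      then show False using in_K_lin[of B u C] h(2) A0 notK by simp
    qed
  qed
  have "(u - u') * (emb A * (u + u') + emb B) = 0"
    using h(2,3) by (simp add: algebra_simps power2_eq_square) (metis (no_types, lifting) add_diff_cancel_left' diff_add_cancel diff_diff_eq2)
  then have "emb A * (u + u') + emb B = 0" using ne by simp
  then have u': "u' = - emb B / emb A - u" using A by (simp add: field_simps eq_neg_iff_add_eq_0)
  define P where "P = (\<lambda>y. \<exists>A B C. A \<noteq> 0 \<and> emb A * u ^ 2 + emb B * u + emb C = 0
                              \<and> y = - emb B / emb A - u)"
  have "P u'" unfolding P_def using A h(2) u' by blast
  then have "P (galois_conj u)" unfolding galois_conj_def P_def[symmetric] by (rule someI)
  then obtain A2 B2 C2 where h2: "A2 \<noteq> 0" "emb A2 * u ^ 2 + emb B2 * u + emb C2 = 0"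
     "galois_conj u = - emb B2 / emb A2 - u" unfolding P_def by blast
  have "emb (A2 * B - A * B2) * u + emb (A2 * C - A * C2) = emb A2 * (emb A * u ^ 2 + emb B * u + emb C)
      - emb A * (emb A2 * u ^ 2 + emb B2 * u + emb C2)"
    by (simp add: algebra_simps power2_eq_square)
  also have "\<dots> = 0" using h(2) h2(2) by simp
  finally have "A2 * B - A * B2 = 0" using in_K_lin notK by blast
  then have "emb A2 * emb B = emb A * emb B2" by (metis emb_mult eq_iff_diff_eq_0)
  then have "emb B2 / emb A2 = emb B / emb A" using A h2(1) by (simp add: field_simps)
  then show ?thesis using h2(3) u' by simp
qed

section \<open>Convergence\<close>

definition convp :: "(nat \<Rightarrow> 'a::group_add fls) \<Rightarrow> 'a fls \<Rightarrow> bool" where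
  "convp x L \<longleftrightarrow> (\<forall>K::int. \<exists>N. \<forall>n\<ge>N. x n = L \<or> K \<le> fls_subdegree (x n - L))"

lemma convp_tendsto:
  fixes x :: "nat \<Rightarrow> 'a::group_add fls"
  assumes "convp x L" shows "x \<longlonglongrightarrow> L"
proof (rule metric_LIMSEQ_I)
  fix r :: real assume r: "0 < r"
  obtain k :: nat where k: "(1/2::real) ^ k < r" using real_arch_pow_inv[OF r, of "1/2"] by auto
  obtain N where N: "\<forall>n\<ge>N. x n = L \<or> int k \<le> fls_subdegree (x n - L)"
    using assms unfolding convp_def by blast
  have "dist (x n) L < r" if "n \<ge> N" for n
  proof (cases "x n = L")
    case True then show ?thesis using r by simp
  next
    case False
    then have ge: "int k \<le> fls_subdegree (x n - L)" using N that by auto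
    then have "dist (x n) L = inverse (2 ^ nat (fls_subdegree (x n - L)))"
      using False by (simp add: dist_fls_def)
    also have "\<dots> \<le> inverse (2 ^ k)"
    proof -
      have "(2::real) ^ k \<le> 2 ^ nat (fls_subdegree (x n - L))"
        by (rule power_increasing) (use ge in auto)
      then show ?thesis by (simp add: le_imp_inverse_le)
    qed
    also have "\<dots> = (1/2) ^ k" by (simp add: power_one_over inverse_eq_divide)
    finally show ?thesis using k by simp
  qed
  then show "\<exists>no. \<forall>n\<ge>no. dist (x n) L < r" by blast
qed

lemma fls_complete:
  fixes x :: "nat \<Rightarrow> 'a::group_add fls"
  assumes H1: "\<forall>n k. k \<le> int n \<longrightarrow> x (Suc n) $$ k = x n $$ k"
    and H2: "\<forall>n k. k < D \<longrightarrow> x n $$ k = 0"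
  shows "\<exists>L. convp x L"
proof -
  define L where "L = Abs_fls (\<lambda>k. x (nat k) $$ k)"
  have Lnth: "L $$ k = x (nat k) $$ k" for k
    unfolding L_def by (rule nth_Abs_fls_lower_bound[of D]) (use H2 in auto)
  have stab: "x n $$ k = x m $$ k" if "k \<le> int m" "m \<le> n" for n m k
    using that(2)
  proof (induction n rule: dec_induct)
    case base then show ?case by simp
  next
    case (step n) then show ?case using H1 that(1) by auto
  qed
  have agree: "L $$ k = x n $$ k" if "k \<le> int n" for n k
  proof (cases "k \<le> 0")
    case True then show ?thesis using stab[of k 0 n] Lnth by simp
  next
    case False then show ?thesis using stab[of k "nat k" n] Lnth that by simp
  qed
  have "convp x L" unfolding convp_def
  proof
    fix K :: int
    have "x n = L \<or> K \<le> fls_subdegree (x n - L)" if "n \<ge> nat K" for n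
    proof (cases "x n = L")
      case False
      then have "x n - L \<noteq> 0" by simp
      then have "int n + 1 \<le> fls_subdegree (x n - L)"
        by (rule fls_subdegree_geI) (use agree in auto)
      then show ?thesis using that by auto
    qed simp
    then show "\<exists>N. \<forall>n\<ge>N. x n = L \<or> K \<le> fls_subdegree (x n - L)" by blast
  qed
  then show ?thesis by blast
qed

lemma convp_val:
  fixes x :: "nat \<Rightarrow> 'a::field fls"
  assumes "convp x L" "\<forall>n. x n \<noteq> 0 \<and> fls_subdegree (x n) = d"
  shows "L \<noteq> 0 \<and> fls_subdegree L = d"
proof -
  obtain N where N: "\<forall>n\<ge>N. x n = L \<or> d + 1 \<le> fls_subdegree (x n - L)"
    using assms(1) unfolding convp_def by blast
  show ?thesis
  proof (cases "x N = L")
    case True then show ?thesis using assms(2) by metis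
  next
    case False
    then have "d + 1 \<le> fls_subdegree (L - x N)" using N by (auto simp: fls_subdegree_minus_sym)
    then have "x N + (L - x N) \<noteq> 0 \<and> fls_subdegree (x N + (L - x N)) = fls_subdegree (x N)"
      using v_add[of "x N" "L - x N"] assms(2) by auto
    then show ?thesis using assms(2) by simp
  qed
qed

lemma cf_fin_cft: "cf_fin c (Suc n) = cft c n (emb (c (Suc n)))"
  by (induction n arbitrary: c) simp_all

lemma cf_fin_val:
  assumes "\<forall>i. 1 \<le> degree (c i)"
  shows "cf_fin c n \<noteq> 0 \<and> fls_subdegree (cf_fin c n) = - int (degree (c 0))"
proof (cases n)
  case 0
  have "c 0 \<noteq> 0" using assms by (metis degree_0 not_one_le_zero)
  then show ?thesis using 0 by simp
next
  case (Suc m)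
  have "c (Suc m) \<noteq> 0" using assms by (metis degree_0 not_one_le_zero)
  then show ?thesis unfolding Suc cf_fin_cft using cft_val[of m c "emb (c (Suc m))"] assms by simp
qed

lemma sum_ge_card:
  assumes "\<forall>i. 1 \<le> i \<longrightarrow> i \<le> m \<longrightarrow> 1 \<le> degree (c i)"
  shows "int m \<le> (\<Sum>i = 1..m. int (degree (c i)))"
proof -
  have "(\<Sum>i = 1..m. (1::int)) \<le> (\<Sum>i = 1..m. int (degree (c i)))"
    by (rule sum_mono) (use assms in auto)
  then show ?thesis by simp
qed

lemma cf_conv:
  assumes adm: "\<forall>i\<ge>1. 1 \<le> degree (c i)"
  shows "convp (cf_fin c) (cf_value c)"
proof -
  define x where "x = cf_fin c"
  have nz: "c i \<noteq> 0" if "i \<ge> 1" for i using adm that by (metis degree_0 not_one_le_zero)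
  have H1: "\<forall>n k. k \<le> int n \<longrightarrow> x (Suc n) $$ k = x n $$ k"
  proof (intro allI impI)
    fix n and k :: int assume k: "k \<le> int n"
    have "x (Suc n) - x n \<noteq> 0 \<and> int n < fls_subdegree (x (Suc n) - x n)"
    proof (cases n)
      case 0
      then have "x (Suc n) - x n = 1 / emb (c 1)" by (simp add: x_def)
      then show ?thesis using adm[rule_format, of 1] nz[of 1] 0 by (simp add: v_inv)
    next
      case (Suc m)
      define u where "u = emb (c (Suc m)) + 1 / emb (c (Suc (Suc m)))"
      define u' where "u' = emb (c (Suc m))"
      have e: "x (Suc n) - x n = cft c m u - cft c m u'"
        unfolding x_def u_def u'_def Suc cf_fin_cft cft_snoc[of c m] by simp
      have vu: "u \<noteq> 0 \<and> fls_subdegree u = - int (degree (c (Suc m)))"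
        unfolding u_def using v_embE[of "c (Suc m)" "1 / emb (c (Suc (Suc m)))"] nz adm[rule_format, of "Suc (Suc m)"]
        by (simp add: v_inv)
      have vu': "u' \<noteq> 0 \<and> fls_subdegree u' = - int (degree (c (Suc m)))"
        unfolding u'_def using nz by simp
      have du: "u - u' = 1 / emb (c (Suc (Suc m)))" unfolding u_def u'_def by simp
      have vdu: "u - u' \<noteq> 0 \<and> fls_subdegree (u - u') = int (degree (c (Suc (Suc m))))"
        unfolding du using nz by (simp add: v_inv)
      have D: "cft c m u - cft c m u' \<noteq> 0 \<and>
        fls_subdegree (cft c m u - cft c m u') = fls_subdegree (u - u') - fls_subdegree u - fls_subdegree u'
          + 2 * (\<Sum>i = 1..m. int (degree (c i)))"
        by (rule cft_diff) (use adm vu vu' vdu in auto)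
      have "int m \<le> (\<Sum>i = 1..m. int (degree (c i)))" by (rule sum_ge_card) (use adm in auto)
      moreover have "1 \<le> degree (c (Suc (Suc m)))" "1 \<le> degree (c (Suc m))" using adm by auto
      ultimately show ?thesis unfolding e using D vu vu' vdu Suc by simp
    qed
    then have "(x (Suc n) - x n) $$ k = 0" using k by (intro fls_eq0_below_subdegree) linarith
    then show "x (Suc n) $$ k = x n $$ k" by simp
  qed
  have H2: "\<forall>n k. k < - int (degree (c 0)) \<longrightarrow> x n $$ k = 0"
  proof (intro allI impI)
    fix n and k :: int assume k: "k < - int (degree (c 0))"
    have e0: "emb (c 0) $$ k = 0" using k by (simp add: emb_nth coeff_eq_0)
    show "x n $$ k = 0"
    proof (cases n)
      case 0 then show ?thesis using e0 by (simp add: x_def)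
    next
      case (Suc m)
      have "cf_fin (\<lambda>i. c (Suc i)) m \<noteq> 0 \<and> fls_subdegree (cf_fin (\<lambda>i. c (Suc i)) m) = - int (degree (c 1))"
        using cf_fin_val[of "\<lambda>i. c (Suc i)" m] adm by simp
      then have "fls_subdegree (1 / cf_fin (\<lambda>i. c (Suc i)) m) > 0" using adm[rule_format, of 1] by (simp add: v_inv)
      then have "(1 / cf_fin (\<lambda>i. c (Suc i)) m) $$ k = 0" using k by simp
      then show ?thesis using e0 Suc by (simp add: x_def)
    qed
  qed
  obtain L where L: "convp x L" using fls_complete[OF H1 H2] by blast
  then have "cf_value c = L" unfolding cf_value_def x_def using convp_tendsto limI by metis
  then show ?thesis using L x_def by simp
qed

lemma cf_value_val:
  assumes "\<forall>i. 1 \<le> degree (c i)"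
  shows "cf_value c \<noteq> 0 \<and> fls_subdegree (cf_value c) = - int (degree (c 0))"
  using convp_val[OF cf_conv] cf_fin_val assms by blast

lemma cf_value_tail:
  assumes adm: "\<forall>i\<ge>1. 1 \<le> degree (c i)"
  shows "cf_value c = emb (c 0) + 1 / cf_value (\<lambda>i. c (Suc i))"
proof -
  define y where "y = cf_value (\<lambda>i. c (Suc i))"
  define d where "d = - int (degree (c 1))"
  have adm': "\<forall>i. 1 \<le> degree (c (Suc i))" using adm by auto
  have cy: "convp (cf_fin (\<lambda>i. c (Suc i))) y" unfolding y_def by (rule cf_conv) (use adm' in auto)
  have vY: "\<forall>n. cf_fin (\<lambda>i. c (Suc i)) n \<noteq> 0 \<and> fls_subdegree (cf_fin (\<lambda>i. c (Suc i)) n) = d"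
    using cf_fin_val[OF adm'] d_def by simp
  have vy: "y \<noteq> 0 \<and> fls_subdegree y = d" using convp_val[OF cy vY] .
  have "convp (\<lambda>n. cf_fin c (Suc n)) (emb (c 0) + 1 / y)" unfolding convp_def
  proof
    fix K :: int
    obtain N where N: "\<forall>n\<ge>N. cf_fin (\<lambda>i. c (Suc i)) n = y \<or>
        K + 2 * d \<le> fls_subdegree (cf_fin (\<lambda>i. c (Suc i)) n - y)"
      using cy unfolding convp_def by blast
    have "cf_fin c (Suc n) = emb (c 0) + 1 / y \<or> K \<le> fls_subdegree (cf_fin c (Suc n) - (emb (c 0) + 1 / y))"
      if "n \<ge> N" for n
    proof (cases "cf_fin (\<lambda>i. c (Suc i)) n = y")
      case True then show ?thesis by simp
    next
      case False
      let ?Y = "cf_fin (\<lambda>i. c (Suc i)) n"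
      have "K + 2 * d \<le> fls_subdegree (?Y - y)" using N that False by auto
      moreover have "fls_subdegree (1 / ?Y - 1 / y) = fls_subdegree (?Y - y) - fls_subdegree ?Y - fls_subdegree y"
        using v_invdiff[of ?Y y] vY vy False by auto
      moreover have "cf_fin c (Suc n) - (emb (c 0) + 1 / y) = 1 / ?Y - 1 / y" by simp
      ultimately show ?thesis using vY vy by simp
    qed
    then show "\<exists>N. \<forall>n\<ge>N. cf_fin c (Suc n) = emb (c 0) + 1 / y \<or>
        K \<le> fls_subdegree (cf_fin c (Suc n) - (emb (c 0) + 1 / y))" by blast
  qed
  then have "(\<lambda>n. cf_fin c (Suc n)) \<longlonglongrightarrow> emb (c 0) + 1 / y" by (rule convp_tendsto)
  then have "(\<lambda>n. cf_fin c (Suc n)) \<longlonglongrightarrow> emb (c 0) + 1 / y" by simp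
  then have "cf_fin c \<longlonglongrightarrow> emb (c 0) + 1 / y" by (rule LIMSEQ_imp_Suc)
  then show ?thesis unfolding cf_value_def y_def by (rule limI)
qed

lemma cf_value_tails:
  assumes adm: "\<forall>i\<ge>1. 1 \<le> degree (c i)"
  shows "cf_value c = cft c n (cf_value (\<lambda>i. c (i + Suc n)))"
  using adm
proof (induction n arbitrary: c)
  case 0 then show ?case using cf_value_tail[of c] by simp
next
  case (Suc n)
  have "cf_value (\<lambda>i. c (Suc i)) = cft (\<lambda>i. c (Suc i)) n (cf_value (\<lambda>i. c (Suc (i + Suc n))))"
    using Suc.IH[of "\<lambda>i. c (Suc i)"] Suc.prems by auto
  then show ?case using cf_value_tail[OF Suc.prems] by simp
qed

lemma cf_value_notK:
  assumes adm: "\<forall>i\<ge>1. 1 \<le> degree (c i)"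
  shows "\<not> in_K (cf_value c)"
proof -
  define x where "x = (\<lambda>n. cf_value (\<lambda>i. c (i + n)))"
  have rec: "x n = emb (c n) + 1 / x (Suc n)" for n
    unfolding x_def using cf_value_tail[of "\<lambda>i. c (i + n)"] adm by simp
  have vx: "x (Suc n) \<noteq> 0 \<and> fls_subdegree (x (Suc n)) = - int (degree (c (Suc n)))" for n
    unfolding x_def using cf_value_val[of "\<lambda>i. c (i + Suc n)"] adm by simp
  have main: "\<forall>n P Q. degree Q = d \<longrightarrow> Q \<noteq> 0 \<longrightarrow> x n \<noteq> emb P / emb Q" for d
  proof (induction d rule: less_induct)
    case (less d)
    show ?case
    proof (intro allI impI notI)
      fix n P Q assume dQ: "degree Q = d" and Q: "Q \<noteq> 0" and eq: "x n = emb P / emb Q"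
      define R where "R = P - c n * Q"
      have "1 / x (Suc n) = x n - emb (c n)" using rec[of n] by simp
      also have "\<dots> = emb R / emb Q" unfolding eq R_def using Q by (simp add: field_simps)
      finally have e: "1 / x (Suc n) = emb R / emb Q" .
      have R: "R \<noteq> 0" using e vx[of n] by auto
      have "x (Suc n) = 1 / (1 / x (Suc n))" by simp
      also have "\<dots> = emb Q / emb R" unfolding e by simp
      finally have xe: "x (Suc n) = emb Q / emb R" .
      have "fls_subdegree (1 / x (Suc n)) = int (degree (c (Suc n)))" using vx[of n] by (simp add: v_inv)
      also have "fls_subdegree (1 / x (Suc n)) = - int (degree R) + int (degree Q)"
        unfolding e using R Q by (simp add: fls_divide_subdegree)
      finally have "degree R < degree Q" using adm[rule_format, of "Suc n"] by linarith
      then show False using less.IH[of "degree R"] dQ R xe by blast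
    qed
  qed
  show ?thesis
  proof
    assume "in_K (cf_value c)"
    then obtain P Q where "Q \<noteq> 0" "cf_value c = emb P / emb Q" unfolding in_K_def by blast
    moreover have "x 0 = cf_value c" unfolding x_def by simp
    ultimately show False using main by metis
  qed
qed

lemma tail_diff:
  assumes c: "\<forall>i. 1 \<le> degree (c i)" and c': "\<forall>i. 1 \<le> degree (c' i)" and ne: "c 0 \<noteq> c' 0"
  shows "cf_value c \<noteq> cf_value c' \<and>
     fls_subdegree (cf_value c - cf_value c') = - int (degree (c 0 - c' 0))"
proof -
  define x1 where "x1 = cf_value (\<lambda>i. c (Suc i))"
  define x2 where "x2 = cf_value (\<lambda>i. c' (Suc i))"
  have v1: "x1 \<noteq> 0 \<and> fls_subdegree x1 = - int (degree (c 1))"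
    unfolding x1_def using cf_value_val[of "\<lambda>i. c (Suc i)"] c by simp
  have v2: "x2 \<noteq> 0 \<and> fls_subdegree x2 = - int (degree (c' 1))"
    unfolding x2_def using cf_value_val[of "\<lambda>i. c' (Suc i)"] c' by simp
  have p1: "fls_subdegree (1 / x1) > 0" using v1 c[rule_format, of 1] by (simp add: v_inv)
  have p2: "fls_subdegree (- (1 / x2)) > 0" using v2 c'[rule_format, of 1] by (simp add: v_inv)
  define e where "e = 1 / x1 - 1 / x2"
  have e: "e = 0 \<or> fls_subdegree e > 0"
  proof (cases "e = 0")
    case False
    then have "fls_subdegree (1 / x1 + - (1 / x2)) \<ge> min (fls_subdegree (1 / x1)) (fls_subdegree (- (1 / x2)))"
      unfolding e_def by (intro fls_plus_subdegree) simp
    then have "fls_subdegree e \<ge> min (fls_subdegree (1 / x1)) (fls_subdegree (- (1 / x2)))"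
      unfolding e_def by simp
    then show ?thesis using p1 p2 by linarith
  qed simp
  have eq: "cf_value c - cf_value c' = emb (c 0 - c' 0) + e"
    unfolding e_def x1_def x2_def
    using cf_value_tail[of c] cf_value_tail[of c'] c c' by simp
  have "emb (c 0 - c' 0) + e \<noteq> 0 \<and> fls_subdegree (emb (c 0 - c' 0) + e) = - int (degree (c 0 - c' 0))"
    using v_embE[of "c 0 - c' 0" e] ne e by simp
  then show ?thesis using eq by (metis eq_iff_diff_eq_0)
qed

lemma good_gen:
  assumes "\<forall>i. 1 \<le> i \<longrightarrow> i \<le> n \<longrightarrow> 1 \<le> degree (c i)" "w \<noteq> 0" "fls_subdegree w \<le> 0"
  shows "good c n w"
proof (cases n)
  case 0 then show ?thesis using assms by simp
next
  case (Suc m)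
  have "good (\<lambda>i. c (Suc i)) m w \<and> cft (\<lambda>i. c (Suc i)) m w \<noteq> 0"
    using cft_val[of m "\<lambda>i. c (Suc i)" w] assms Suc by auto
  then show ?thesis using Suc by simp
qed

lemma fixpoint_cq:
  assumes "good c n u" "good c n u'" "cft c n u = u" "cft c n u' = u'"
    and "good c n w" "cft c n w \<noteq> w"
  shows "cq u u'"
proof -
  obtain P Q R S where m: "mob c n = (P, Q, R, S)" by (metis prod_cases4)
  have fp: "emb R * x ^ 2 + emb (S - P) * x + emb (- Q) = 0" if "good c n x" "cft c n x = x" for x
  proof -
    have h: "emb R * x + emb S \<noteq> 0 \<and> cft c n x = (emb P * x + emb Q) / (emb R * x + emb S)"
      using mob_rep[OF that(1) m] by blast
    then have "x * (emb R * x + emb S) = emb P * x + emb Q" using that(2)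
      by (metis nonzero_eq_divide_eq mult.commute)
    then show ?thesis by (simp add: algebra_simps power2_eq_square)
  qed
  have nt: "R \<noteq> 0 \<or> S - P \<noteq> 0 \<or> - Q \<noteq> 0"
  proof (rule ccontr)
    assume "\<not> ?thesis"
    then have z: "R = 0" "S = P" "Q = 0" by auto
    have h: "emb R * w + emb S \<noteq> 0 \<and> cft c n w = (emb P * w + emb Q) / (emb R * w + emb S)"
      using mob_rep[OF assms(5) m] by blast
    then have "cft c n w = w" using z by simp
    then show False using assms(6) by simp
  qed
  show ?thesis unfolding cq_def using fp[OF assms(1,3)] fp[OF assms(2,4)] nt by blast
qed

lemma card_ge2: "2 \<le> CARD('a::{finite,field})"
proof -
  have "card {0::'a, 1} \<le> CARD('a)" by (rule card_mono) auto
  then show ?thesis by simp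
qed


lemma deg_diff_max:
  fixes p p' :: "'a::field poly"
  assumes "degree p \<noteq> degree p'"
  shows "degree (p - p') = max (degree p) (degree p')"
proof (cases "degree p' < degree p")
  case True
  have "degree (p + - p') = degree p" by (rule degree_add_eq_left) (use True in simp)
  then show ?thesis using True by simp
next
  case False
  then have lt: "degree p < degree (- p')" using assms by simp
  have "degree (p + - p') = degree (- p')" by (rule degree_add_eq_right[OF lt])
  then show ?thesis using False by simp
qed

lemma deg_base:
  fixes p p' :: "'a::field poly"
  assumes "1 \<le> degree p" "1 \<le> degree p'"
  shows "1 \<le> int (degree p) + int (degree p') - int (degree (p - p'))"
    and "degree p \<noteq> degree p' \<Longrightarrow>
      int (degree p) + int (degree p') - int (degree (p - p')) = int (min (degree p) (degree p'))"
proof -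
  have "degree (p - p') \<le> max (degree p) (degree p')" by (rule degree_diff_le_max)
  then show "1 \<le> int (degree p) + int (degree p') - int (degree (p - p'))" using assms by linarith
next
  assume "degree p \<noteq> degree p'"
  then show "int (degree p) + int (degree p') - int (degree (p - p')) = int (min (degree p) (degree p'))"
    using deg_diff_max[of p p'] by linarith
qed

lemma s'_of_eq:
  assumes "s \<ge> 1" shows "s'_of s t = t mod s + 1"
proof (cases "t mod s = 0")
  case True then show ?thesis unfolding s'_of_def s0_of_def by simp
next
  case False
  have "t mod s < s" using assms by simp
  then show ?thesis unfolding s'_of_def s0_of_def using False by simp
qed

theorem corollary2p4:
  fixes a b :: "nat \<Rightarrow> 'a::{finite,field} poly"
    and s r :: nat
    and f \<tau> \<alpha> :: "'a fls"
    and \<rho> :: real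
  assumes b_nonconst: "\<forall>i\<in>{1..s}. degree (b i) \<ge> 1"
    and b_period: "shortest_period b s"
    and tau_def: "\<tau> = cf_value (per_word b s)"
    and a_adm: "cf_admissible a"
    and f_def: "f = cf_value a"
    and f_notK: "\<not> in_K f"
    and f_notTheta: "f \<notin> Theta \<tau>"
    and r_pos: "r \<ge> 1"
    and ar_ne: "a r \<noteq> b s"
    and alpha_def: "\<alpha> = cf_value (alpha_seq a b s r)"
    and rho_def: "\<rho> = absv (f - \<alpha>) / absv (\<alpha> - galois_conj \<alpha>)"
  shows
    "(a (r + 1) \<noteq> b 1 \<longrightarrow>
        - log (real (CARD('a))) \<rho> =
          real_of_int (int (degree (a r)) + int (degree (b s)) - int (degree (a r - b s))
            + int (degree (a (r + 1))) + int (degree (b 1)) - int (degree (a (r + 1) - b 1))))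
     \<and> (a (r + 1) = b 1 \<longrightarrow>
        (\<exists>t. largest_match a b s r t) \<and>
        (\<forall>t. largest_match a b s r t \<longrightarrow>
          - log (real (CARD('a))) \<rho> =
            real_of_int (2 * (\<Sum>j = 1..t. int (degree (a (r + j))))
              + int (degree (a r)) + int (degree (b s)) - int (degree (a r - b s))
              + int (degree (a (r + t + 1))) + int (degree (b (s'_of s t)))
              - int (degree (a (r + t + 1) - b (s'_of s t))))))
     \<and> \<rho> \<le> real (CARD('a)) powr (-2)
     \<and> (\<forall>t s'. ((a (r + 1) \<noteq> b 1 \<and> t = 0 \<and> s' = 1) \<or>
                (a (r + 1) = b 1 \<and> largest_match a b s r t \<and> s' = s'_of s t)) \<longrightarrow>
          degree (a r) \<noteq> degree (b s) \<longrightarrow>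
          degree (a (r + t + 1)) \<noteq> degree (b s') \<longrightarrow>
          - log (real (CARD('a))) \<rho> =
            real_of_int (2 * (\<Sum>j = 1..t. int (degree (a (r + j))))
              + int (min (degree (a r)) (degree (b s)))
              + int (min (degree (a (r + t + 1))) (degree (b s')))))"
proof -
  have s1: "s \<ge> 1" using b_period unfolding shortest_period_def by simp
  define q where "q = real (CARD('a))"
  have q2: "q \<ge> 2" unfolding q_def using card_ge2[where 'a='a] by linarith
  define bb where "bb = (\<lambda>i. b (i mod s + 1))"
  define gg where "gg = (\<lambda>i. b (s - i mod s))"
  have bbn: "\<forall>i. 1 \<le> degree (bb i)"
  proof
    fix i have "i mod s + 1 \<in> {1..s}" using s1
      by (simp add: Suc_leI)
    then show "1 \<le> degree (bb i)" using b_nonconst unfolding bb_def by blast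
  qed
  have ggn: "\<forall>i. 1 \<le> degree (gg i)"
  proof
    fix i have "i mod s < s" using s1 by simp
    then have "s - i mod s \<in> {1..s}" by auto
    then show "1 \<le> degree (gg i)" using b_nonconst unfolding gg_def by blast
  qed
  have aadm: "\<forall>i\<ge>1. 1 \<le> degree (a i)" using a_adm unfolding cf_admissible_def by blast
  have anz: "a i \<noteq> 0" if "i \<ge> 1" for i using aadm that by (metis degree_0 not_one_le_zero)
  have bsnz: "1 \<le> degree (b s)" "1 \<le> degree (b 1)" using b_nonconst s1 by auto
  have bb0: "bb 0 = b 1" unfolding bb_def by simp
  have gg0: "gg 0 = b s" unfolding gg_def by simp
  define f1 where "f1 = cf_value (\<lambda>i. a (i + Suc r))"
  define \<beta> where "\<beta> = cf_value bb"
  define \<gamma> where "\<gamma> = cf_value gg"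
  define \<gamma>1 where "\<gamma>1 = cf_value (\<lambda>i. gg (Suc i))"
  define z where "z = - 1 / \<gamma>"
  define \<alpha>' where "\<alpha>' = cft a r z"
  obtain m where m: "r = Suc m" using r_pos by (cases r) auto
  have v\<beta>: "\<beta> \<noteq> 0 \<and> fls_subdegree \<beta> = - int (degree (b 1))"
    unfolding \<beta>_def using cf_value_val[OF bbn] bb0 by simp
  have v\<gamma>: "\<gamma> \<noteq> 0 \<and> fls_subdegree \<gamma> = - int (degree (b s))"
    unfolding \<gamma>_def using cf_value_val[OF ggn] gg0 by simp
  have \<gamma>rec: "\<gamma> = emb (b s) + 1 / \<gamma>1"
    unfolding \<gamma>_def \<gamma>1_def using cf_value_tail[of gg] ggn gg0 by simp
  have v\<gamma>1: "\<gamma>1 \<noteq> 0 \<and> fls_subdegree \<gamma>1 = - int (degree (gg 1))"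
    unfolding \<gamma>1_def using cf_value_val[of "\<lambda>i. gg (Suc i)"] ggn by simp
  have vz: "z \<noteq> 0 \<and> fls_subdegree z = int (degree (b s))"
    unfolding z_def using v\<gamma> by (simp add: v_inv minus_divide_left[symmetric] del: minus_divide_left)
  have f_eq: "f = cft a r f1" unfolding f_def f1_def by (rule cf_value_tails[OF aadm])
  have vf1: "f1 \<noteq> 0 \<and> fls_subdegree f1 = - int (degree (a (Suc r)))"
    unfolding f1_def using cf_value_val[of "\<lambda>i. a (i + Suc r)"] aadm by simp
  have asadm: "\<forall>i\<ge>1. 1 \<le> degree (alpha_seq a b s r i)"
  proof (intro allI impI)
    fix i :: nat assume i: "1 \<le> i"
    show "1 \<le> degree (alpha_seq a b s r i)"
    proof (cases "i \<le> r")
      case True then show ?thesis using aadm i by (simp add: alpha_seq_def)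
    next
      case False
      have "alpha_seq a b s r i = bb (i - r - 1)" using False by (simp add: alpha_seq_def bb_def)
      then show ?thesis using bbn by simp
    qed
  qed
  have \<alpha>_eq: "\<alpha> = cft a r \<beta>"
  proof -
    have "\<alpha> = cft (alpha_seq a b s r) r (cf_value (\<lambda>i. alpha_seq a b s r (i + Suc r)))"
      unfolding alpha_def by (rule cf_value_tails[OF asadm])
    moreover have "(\<lambda>i. alpha_seq a b s r (i + Suc r)) = bb"
      by (rule ext) (simp add: alpha_seq_def bb_def)
    moreover have "cft (alpha_seq a b s r) r w = cft a r w" for w
      by (rule cft_cong) (simp add: alpha_seq_def)
    ultimately show ?thesis unfolding \<beta>_def by simp
  qed
  have \<tau>_eq: "\<tau> = 1 / \<beta>"
  proof -
    have padm: "\<forall>i\<ge>1. 1 \<le> degree (per_word b s i)"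
    proof (intro allI impI)
      fix i :: nat assume "1 \<le> i"
      then have "per_word b s i = bb (i - 1)" by (simp add: per_word_def bb_def)
      then show "1 \<le> degree (per_word b s i)" using bbn by simp
    qed
    have "(\<lambda>i. per_word b s (Suc i)) = bb" by (rule ext) (simp add: per_word_def bb_def)
    moreover have "per_word b s 0 = 0" by (simp add: per_word_def)
    ultimately show ?thesis unfolding tau_def \<beta>_def using cf_value_tail[OF padm] by simp
  qed
  have \<beta>fix: "cft bb (s - 1) \<beta> = \<beta>"
  proof -
    have "(\<lambda>i. bb (i + Suc (s - 1))) = bb" using s1 by (intro ext) (simp add: bb_def)
    then show ?thesis using cf_value_tails[of bb "s - 1"] bbn unfolding \<beta>_def by simp
  qed
  have bbn': "\<forall>i\<le>s - 1. 1 \<le> degree (bb i)" using bbn by simp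
  have good\<beta>: "good bb (s - 1) \<beta>" using cft_val[OF bbn', of \<beta>] v\<beta> by simp
  define zz where "zz = (\<lambda>j. - 1 / cf_value (\<lambda>i. gg (i + j)))"
  have Gv: "cf_value (\<lambda>i. gg (i + j)) \<noteq> 0" for j using cf_value_val[of "\<lambda>i. gg (i + j)"] ggn by simp
  have zz_nz: "zz j \<noteq> 0" for j unfolding zz_def using Gv by simp
  have zz_rec: "zz (Suc j) = emb (gg j) + 1 / zz j" for j
  proof -
    let ?G = "\<lambda>j. cf_value (\<lambda>i. gg (i + j))"
    have "?G j = emb (gg j) + 1 / ?G (Suc j)"
      using cf_value_tail[of "\<lambda>i. gg (i + j)"] ggn by simp
    then have "1 / ?G (Suc j) = ?G j - emb (gg j)" by simp
    moreover have "1 / zz j = - ?G j" unfolding zz_def using Gv by simp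
    ultimately show ?thesis unfolding zz_def
      by (simp add: minus_divide_left[symmetric] del: minus_divide_left)
  qed
  have chain: "k < s \<longrightarrow> cft (\<lambda>i. bb (i + (s - 1 - k))) k (zz 0) = zz (Suc k)
      \<and> good (\<lambda>i. bb (i + (s - 1 - k))) k (zz 0)" for k
  proof (induction k)
    case 0
    have "bb (s - 1) = gg 0" unfolding bb_def gg_def using s1 by simp
    then show ?case using zz_rec[of 0] zz_nz by simp
  next
    case (Suc k)
    show ?case
    proof
      assume k: "Suc k < s"
      have e: "(\<lambda>i. bb (Suc (i + (s - Suc (Suc k))))) = (\<lambda>i. bb (i + (s - Suc k)))"
        using k by (intro ext) (simp add: Suc_diff_Suc)
      have e3: "Suc (s - Suc (Suc k)) = s - Suc k" using k by linarith
      have e2: "bb (s - Suc (Suc k)) = gg (Suc k)" unfolding bb_def gg_def using k e3 by simp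
      have IH: "cft (\<lambda>i. bb (i + (s - 1 - k))) k (zz 0) = zz (Suc k)
        \<and> good (\<lambda>i. bb (i + (s - 1 - k))) k (zz 0)" using Suc.IH k by simp
      show "cft (\<lambda>i. bb (i + (s - 1 - Suc k))) (Suc k) (zz 0) = zz (Suc (Suc k))
        \<and> good (\<lambda>i. bb (i + (s - 1 - Suc k))) (Suc k) (zz 0)"
        using IH zz_rec[of "Suc k"] zz_nz[of "Suc k"] by (simp add: e e2)
    qed
  qed
  have zzs: "zz s = zz 0"
  proof -
    have "(\<lambda>i. gg (i + s)) = (\<lambda>i. gg (i + 0))" by (intro ext) (simp add: gg_def)
    then show ?thesis unfolding zz_def by simp
  qed
  have z0: "z = zz 0" unfolding z_def zz_def \<gamma>_def by simp
  have zfix: "cft bb (s - 1) z = z" and goodz: "good bb (s - 1) z"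
    using chain[of "s - 1"] s1 zzs z0 by auto
  define w where "w = (fls_X_inv :: 'a fls) ^ (degree (b 1) + 1)"
  have vw: "w \<noteq> 0" "fls_subdegree w = - int (degree (b 1) + 1)" unfolding w_def by simp_all
  have goodw: "good bb (s - 1) w" and cw: "cft bb (s - 1) w \<noteq> w"
    using cft_val[OF bbn', of w] vw bb0 by auto
  have cq\<beta>z: "cq \<beta> z" by (rule fixpoint_cq[OF good\<beta> goodz \<beta>fix zfix goodw cw])
  have adm1m: "\<forall>i. 1 \<le> i \<longrightarrow> i \<le> r \<longrightarrow> 1 \<le> degree (a i)" using aadm by auto
  have gooda\<beta>: "good a r \<beta>" by (rule good_gen[OF adm1m]) (use v\<beta> in auto)
  define Y' where "Y' = emb (a r) + 1 / z"
  have Y'e: "Y' = emb (a r - b s) + - (1 / \<gamma>1)"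
  proof -
    have "1 / z = - \<gamma>" unfolding z_def using v\<gamma> by simp
    then show ?thesis unfolding Y'_def using \<gamma>rec by simp
  qed
  have vY': "Y' \<noteq> 0 \<and> fls_subdegree Y' = - int (degree (a r - b s))"
  proof -
    have "fls_subdegree (- (1 / \<gamma>1)) > 0" using v\<gamma>1 ggn[rule_format, of 1] by (simp add: v_inv)
    then show ?thesis unfolding Y'e using v_embE[of "a r - b s" "- (1 / \<gamma>1)"] ar_ne by simp
  qed
  have goodaz: "good a r z"
  proof -
    have "good a m Y'" by (rule good_gen) (use aadm vY' m in auto)
    then show ?thesis unfolding m using good_snoc[of z a m] vz Y'_def m by simp
  qed
  have cq\<alpha>: "cq \<alpha> \<alpha>'" unfolding \<alpha>_eq \<alpha>'_def by (rule cq_cft[OF gooda\<beta> goodaz cq\<beta>z])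
  define Y where "Y = emb (a r) + 1 / \<beta>"
  have vY: "Y \<noteq> 0 \<and> fls_subdegree Y = - int (degree (a r))"
  proof -
    have "fls_subdegree (1 / \<beta>) > 0" using v\<beta> bsnz by (simp add: v_inv)
    then show ?thesis unfolding Y_def using v_embE[of "a r" "1 / \<beta>"] anz[of r] r_pos by simp
  qed
  have \<alpha>Y: "\<alpha> = cft a m Y" unfolding \<alpha>_eq Y_def m cft_snoc by simp
  have \<alpha>'Y: "\<alpha>' = cft a m Y'" unfolding \<alpha>'_def Y'_def m cft_snoc by simp
  have YY: "Y \<noteq> Y' \<and> fls_subdegree (Y - Y') = - int (degree (b s))"
  proof -
    have ne: "\<beta> \<noteq> z" using v\<beta> vz bsnz by auto
    have "\<beta> + - z \<noteq> 0 \<and> fls_subdegree (\<beta> + - z) = fls_subdegree \<beta>"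
    proof -
      have "fls_subdegree \<beta> < fls_subdegree (- z)" using v\<beta> vz bsnz by simp
      then show ?thesis using v_add[of \<beta> "- z"] v\<beta> by blast
    qed
    moreover have "Y - Y' = 1 / \<beta> - 1 / z" unfolding Y_def Y'_def by simp
    ultimately show ?thesis using v_invdiff[of \<beta> z] v\<beta> vz ne by (simp add: eq_iff_diff_eq_0[of Y])
  qed
  have D\<alpha>: "cft a m Y - cft a m Y' \<noteq> 0 \<and>
    fls_subdegree (cft a m Y - cft a m Y') = fls_subdegree (Y - Y') - fls_subdegree Y - fls_subdegree Y'
      + 2 * (\<Sum>i = 1..m. int (degree (a i)))"
    by (rule cft_diff) (use aadm vY vY' YY m in auto)
  have \<alpha>ne: "\<alpha> \<noteq> \<alpha>'" using D\<alpha> \<alpha>Y \<alpha>'Y by simp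
  have conj: "galois_conj \<alpha> = \<alpha>'"
    by (rule galois_conj_eq[OF _ \<alpha>ne cq\<alpha>]) (unfold alpha_def, rule cf_value_notK[OF asadm])
  define V2 where "V2 = fls_subdegree (\<alpha> - \<alpha>')"
  have V2: "V2 = - int (degree (b s)) + int (degree (a r)) + int (degree (a r - b s))
      + 2 * (\<Sum>i = 1..m. int (degree (a i)))"
    unfolding V2_def \<alpha>Y \<alpha>'Y using D\<alpha> YY vY vY' by simp
  have Sr: "(\<Sum>i = 1..r. int (degree (a i))) = (\<Sum>i = 1..m. int (degree (a i))) + int (degree (a r))"
    unfolding m by simp
  have key: "f - \<alpha> \<noteq> 0 \<and> \<rho> = q powr (- X) \<and> - log q \<rho> = X"
    if "f1 \<noteq> \<beta>" "X = fls_subdegree (f1 - \<beta>) + int (degree (a (r + 1))) + int (degree (b 1))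
       + int (degree (a r)) + int (degree (b s)) - int (degree (a r - b s))" for X
  proof -
    have Df: "cft a r f1 - cft a r \<beta> \<noteq> 0 \<and>
      fls_subdegree (cft a r f1 - cft a r \<beta>) = fls_subdegree (f1 - \<beta>) - fls_subdegree f1 - fls_subdegree \<beta>
        + 2 * (\<Sum>i = 1..r. int (degree (a i)))"
      by (rule cft_diff) (use aadm vf1 v\<beta> that(1) in auto)
    have fa: "f - \<alpha> \<noteq> 0" using Df f_eq \<alpha>_eq by simp
    have X: "X = fls_subdegree (f - \<alpha>) - V2"
      using Df f_eq \<alpha>_eq V2 Sr vf1 v\<beta> that(2) by simp
    have "\<rho> = q powr (- fls_subdegree (f - \<alpha>)) / q powr (- V2)"
      unfolding rho_def conj absv_def V2_def q_def using fa \<alpha>ne by simp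
    also have "\<dots> = q powr (- X)" unfolding X by (simp add: powr_diff[symmetric])
    finally have r: "\<rho> = q powr (- X)" .
    have "- log q \<rho> = X" unfolding r using q2 by simp
    then show ?thesis using r fa by simp
  qed
  define Eb where "Eb = int (degree (a r)) + int (degree (b s)) - int (degree (a r - b s))"
  have Eb1: "1 \<le> Eb" unfolding Eb_def by (rule deg_base(1)) (use aadm r_pos bsnz in auto)
  have Ebm: "degree (a r) \<noteq> degree (b s) \<Longrightarrow> Eb = int (min (degree (a r)) (degree (b s)))"
    unfolding Eb_def by (rule deg_base(2)) (use aadm r_pos bsnz in auto)
  have a'n: "\<forall>i. 1 \<le> degree (a (i + Suc r))" using aadm by auto
  have caseI: "- log q \<rho> = Eb + (int (degree (a (r + 1))) + int (degree (b 1)) - int (degree (a (r + 1) - b 1)))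
      \<and> \<rho> = q powr (- (Eb + (int (degree (a (r + 1))) + int (degree (b 1)) - int (degree (a (r + 1) - b 1)))))"
    if h: "a (r + 1) \<noteq> b 1"
  proof -
    have T: "f1 \<noteq> \<beta> \<and> fls_subdegree (f1 - \<beta>) = - int (degree (a (Suc r) - b 1))"
      unfolding f1_def \<beta>_def using tail_diff[OF a'n bbn] h bb0 by simp
    have "f - \<alpha> \<noteq> 0 \<and> \<rho> = q powr (- (Eb + (int (degree (a (r + 1))) + int (degree (b 1)) - int (degree (a (r + 1) - b 1)))))
       \<and> - log q \<rho> = Eb + (int (degree (a (r + 1))) + int (degree (b 1)) - int (degree (a (r + 1) - b 1)))"
      by (rule key[OF conjunct1[OF T]]) (use T in \<open>simp add: Eb_def\<close>)
    then show ?thesis by blast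
  qed
  have exII: "\<exists>t. largest_match a b s r t" if h: "a (r + 1) = b 1"
  proof (rule ccontr)
    assume nex: "\<not> ?thesis"
    have pmall: "prefix_match a b s r t" for t
    proof (induction t)
      case 0 then show ?case unfolding prefix_match_def by simp
    next
      case (Suc t)
      then obtain t' where t': "prefix_match a b s r t'" "\<not> t' \<le> t"
        using nex unfolding largest_match_def by blast
      then show ?case unfolding prefix_match_def by auto
    qed
    have "alpha_seq a b s r = a"
    proof
      fix n show "alpha_seq a b s r n = a n"
      proof (cases "n \<le> r")
        case True then show ?thesis by (simp add: alpha_seq_def)
      next
        case False
        have "n - r \<in> {1..n - r}" using False by auto
        then have "a (r + (n - r)) = per_word b s (n - r)"
          using pmall[of "n - r"] unfolding prefix_match_def by blast
        then show ?thesis using False by (simp add: alpha_seq_def per_word_def)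
      qed
    qed
    then have fa: "f = \<alpha>" unfolding f_def alpha_def by simp
    obtain P Q R S where mb: "mob a r = (P, Q, R, S)" by (metis prod_cases4)
    have rep: "emb R * \<beta> + emb S \<noteq> 0 \<and> cft a r \<beta> = (emb P * \<beta> + emb Q) / (emb R * \<beta> + emb S)
      \<and> (P * S - Q * R = 1 \<or> P * S - Q * R = -1)" by (rule mob_rep[OF gooda\<beta> mb])
    have tb: "\<tau> * \<beta> = 1" unfolding \<tau>_eq using v\<beta> by simp
    have tnz: "\<tau> \<noteq> 0" using tb by auto
    have e1: "emb S * \<tau> + emb R = \<tau> * (emb R * \<beta> + emb S)" using tb by (simp add: algebra_simps)
    have e2: "emb Q * \<tau> + emb P = \<tau> * (emb P * \<beta> + emb Q)" using tb by (simp add: algebra_simps)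
    have den: "emb S * \<tau> + emb R \<noteq> 0" unfolding e1 using rep tnz by simp
    have fe: "f = (emb Q * \<tau> + emb P) / (emb S * \<tau> + emb R)"
      unfolding fa \<alpha>_eq e1 e2 using rep tnz by simp
    have det: "Q * R - P * S \<noteq> 0 \<and> degree (Q * R - P * S) = 0"
    proof -
      have "Q * R - P * S = - (P * S - Q * R)" by simp
      then show ?thesis using rep by (metis degree_1 degree_minus minus_minus one_neq_zero neg_equal_0_iff_equal)
    qed
    have "f \<in> Theta \<tau>" unfolding Theta_def using fe det den by blast
    then show False using f_notTheta by simp
  qed
  have caseII: "- log q \<rho> = 2 * (\<Sum>j = 1..t. int (degree (a (r + j)))) + Eb
        + (int (degree (a (r + t + 1))) + int (degree (b (s'_of s t))) - int (degree (a (r + t + 1) - b (s'_of s t))))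
      \<and> \<rho> = q powr (- (2 * (\<Sum>j = 1..t. int (degree (a (r + j)))) + Eb
        + (int (degree (a (r + t + 1))) + int (degree (b (s'_of s t))) - int (degree (a (r + t + 1) - b (s'_of s t))))))"
    if h: "a (r + 1) = b 1" and lm: "largest_match a b s r t" for t
  proof -
    have pm: "prefix_match a b s r t" and mx: "\<And>t'. prefix_match a b s r t' \<Longrightarrow> t' \<le> t"
      using lm unfolding largest_match_def by auto
    have "prefix_match a b s r 1" unfolding prefix_match_def per_word_def using h by simp
    then have "1 \<le> t" using mx by blast
    then obtain t0 where t0: "t = Suc t0" by (cases t) auto
    define a' where "a' = (\<lambda>i. a (i + Suc r))"
    have a'adm: "\<forall>i\<ge>1. 1 \<le> degree (a' i)" using a'n unfolding a'_def by simp
    have cong: "a' i = bb i" if "i \<le> t0" for i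
    proof -
      have "Suc i \<in> {1..t}" using that t0 by auto
      then have "a (r + Suc i) = per_word b s (Suc i)" using pm unfolding prefix_match_def by blast
      then show ?thesis unfolding a'_def bb_def per_word_def by (simp add: add.commute)
    qed
    define f2 where "f2 = cf_value (\<lambda>i. a' (i + Suc t0))"
    define \<beta>2 where "\<beta>2 = cf_value (\<lambda>i. bb (i + Suc t0))"
    have f1e: "f1 = cft a' t0 f2" unfolding f1_def f2_def a'_def[symmetric] by (rule cf_value_tails[OF a'adm])
    have \<beta>e: "\<beta> = cft a' t0 \<beta>2"
    proof -
      have "\<beta> = cft bb t0 \<beta>2" unfolding \<beta>_def \<beta>2_def by (rule cf_value_tails) (use bbn in auto)
      also have "\<dots> = cft a' t0 \<beta>2" by (rule cft_cong) (use cong in auto)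
      finally show ?thesis .
    qed
    have sp: "s'_of s t = t mod s + 1" using s'_of_eq s1 by blast
    have ne: "a (r + t + 1) \<noteq> b (s'_of s t)"
    proof
      assume eq: "a (r + t + 1) = b (s'_of s t)"
      have "prefix_match a b s r (Suc t)" unfolding prefix_match_def
      proof
        fix j assume j: "j \<in> {1..Suc t}"
        show "a (r + j) = per_word b s j"
        proof (cases "j = Suc t")
          case True then show ?thesis using eq sp by (simp add: per_word_def)
        next
          case False
          then have "j \<in> {1..t}" using j by auto
          then show ?thesis using pm unfolding prefix_match_def by blast
        qed
      qed
      then show False using mx by fastforce
    qed
    have cn: "\<forall>i. 1 \<le> degree (a' (i + Suc t0))" using aadm unfolding a'_def by simp
    have bn2: "\<forall>i. 1 \<le> degree (bb (i + Suc t0))" using bbn by simp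
    have c0: "a' (0 + Suc t0) = a (r + t + 1)" unfolding a'_def t0 by (simp add: add.commute)
    have bbt: "bb t = b (s'_of s t)" by (simp add: bb_def sp)
    have c0': "bb (0 + Suc t0) = b (s'_of s t)" using bbt t0 by simp
    have T: "f2 \<noteq> \<beta>2 \<and> fls_subdegree (f2 - \<beta>2) = - int (degree (a (r + t + 1) - b (s'_of s t)))"
      unfolding f2_def \<beta>2_def using tail_diff[OF cn bn2] ne c0 c0' by simp
    have vf2: "f2 \<noteq> 0 \<and> fls_subdegree f2 = - int (degree (a (r + t + 1)))"
      unfolding f2_def using cf_value_val[OF cn] c0 by simp
    have vb2: "\<beta>2 \<noteq> 0 \<and> fls_subdegree \<beta>2 = - int (degree (b (s'_of s t)))"
      unfolding \<beta>2_def using cf_value_val[OF bn2] c0' by simp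
    have D: "cft a' t0 f2 - cft a' t0 \<beta>2 \<noteq> 0 \<and>
      fls_subdegree (cft a' t0 f2 - cft a' t0 \<beta>2) = fls_subdegree (f2 - \<beta>2) - fls_subdegree f2 - fls_subdegree \<beta>2
        + 2 * (\<Sum>i = 1..t0. int (degree (a' i)))"
      by (rule cft_diff) (use a'adm vf2 vb2 T in auto)
    have f1b: "f1 \<noteq> \<beta>" using D f1e \<beta>e by simp
    have S1: "(\<Sum>j = 1..t. int (degree (a (r + j)))) = int (degree (a (r + 1))) + (\<Sum>i = 1..t0. int (degree (a' i)))"
    proof -
      have "(\<Sum>j = 1..t. int (degree (a (r + j)))) = int (degree (a (r + 1))) + (\<Sum>j = 1..t0. int (degree (a (r + Suc j))))"
        unfolding t0 by (rule sum_Suc_shift)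
      moreover have "(\<Sum>j = 1..t0. int (degree (a (r + Suc j)))) = (\<Sum>i = 1..t0. int (degree (a' i)))"
        unfolding a'_def by (rule sum.cong) (simp_all add: add.commute)
      ultimately show ?thesis by simp
    qed
    have X: "fls_subdegree (f1 - \<beta>) = - int (degree (a (r + t + 1) - b (s'_of s t)))
        + int (degree (a (r + t + 1))) + int (degree (b (s'_of s t))) + 2 * (\<Sum>i = 1..t0. int (degree (a' i)))"
      using D f1e \<beta>e T vf2 vb2 by simp
    let ?E = "2 * (\<Sum>j = 1..t. int (degree (a (r + j)))) + Eb
        + (int (degree (a (r + t + 1))) + int (degree (b (s'_of s t))) - int (degree (a (r + t + 1) - b (s'_of s t))))"
    have "f - \<alpha> \<noteq> 0 \<and> \<rho> = q powr (- ?E) \<and> - log q \<rho> = ?E"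
      by (rule key[OF f1b]) (use X S1 h in \<open>simp add: Eb_def\<close>)
    then show ?thesis by blast
  qed
  have mono: "q powr (- X) \<le> q powr (-2)" if "2 \<le> X" for X :: int
    by (rule powr_mono) (use that q2 in auto)
  have part3: "\<rho> \<le> q powr (-2)"
  proof (cases "a (r + 1) = b 1")
    case False
    have "1 \<le> int (degree (a (r + 1))) + int (degree (b 1)) - int (degree (a (r + 1) - b 1))"
      by (rule deg_base(1)) (use aadm bsnz in auto)
    then show ?thesis using caseI[OF False] mono Eb1 by (metis add_mono one_add_one)
  next
    case True
    obtain t where lm: "largest_match a b s r t" using exII[OF True] by blast
    have sp1: "s'_of s t \<in> {1..s}" using s'_of_eq[OF s1, of t] s1
      by (simp add: Suc_leI)
    have "1 \<le> int (degree (a (r + t + 1))) + int (degree (b (s'_of s t))) - int (degree (a (r + t + 1) - b (s'_of s t)))"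
      by (rule deg_base(1)) (use aadm b_nonconst sp1 in auto)
    moreover have "0 \<le> (\<Sum>j = 1..t. int (degree (a (r + j))))" by (rule sum_nonneg) simp
    ultimately show ?thesis using caseII[OF True lm] mono[of "2 * (\<Sum>j = 1..t. int (degree (a (r + j)))) + Eb
        + (int (degree (a (r + t + 1))) + int (degree (b (s'_of s t))) - int (degree (a (r + t + 1) - b (s'_of s t))))"] Eb1
      by linarith
  qed
  have part4: "- log q \<rho> = real_of_int (2 * (\<Sum>j = 1..t. int (degree (a (r + j))))
              + int (min (degree (a r)) (degree (b s)))
              + int (min (degree (a (r + t + 1))) (degree (b s'))))"
    if h: "(a (r + 1) \<noteq> b 1 \<and> t = 0 \<and> s' = 1) \<or> (a (r + 1) = b 1 \<and> largest_match a b s r t \<and> s' = s'_of s t)"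
       and d1: "degree (a r) \<noteq> degree (b s)" and d2: "degree (a (r + t + 1)) \<noteq> degree (b s')" for t s'
  proof -
    have sp1: "s' \<in> {1..s}" using h s'_of_eq[OF s1, of t] s1 by (auto simp: Suc_leI)
    have m2: "int (degree (a (r + t + 1))) + int (degree (b s')) - int (degree (a (r + t + 1) - b s'))
        = int (min (degree (a (r + t + 1))) (degree (b s')))"
      by (rule deg_base(2)) (use aadm b_nonconst sp1 d2 in auto)
    show ?thesis
    proof (cases "a (r + 1) = b 1")
      case False
      then have ts: "t = 0" "s' = 1" using h by auto
      have L: "- log q \<rho> = real_of_int (Eb + (int (degree (a (r + 1))) + int (degree (b 1)) - int (degree (a (r + 1) - b 1))))"
        using caseI[OF False] by blast
      have I: "Eb + (int (degree (a (r + 1))) + int (degree (b 1)) - int (degree (a (r + 1) - b 1)))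
         = 2 * (\<Sum>j = 1..t. int (degree (a (r + j)))) + int (min (degree (a r)) (degree (b s)))
              + int (min (degree (a (r + t + 1))) (degree (b s')))"
        using m2 Ebm[OF d1] ts by simp
      from L show ?thesis by (simp only: I)
    next
      case True
      then have lm: "largest_match a b s r t" and ss: "s' = s'_of s t" using h by auto
      have L: "- log q \<rho> = real_of_int (2 * (\<Sum>j = 1..t. int (degree (a (r + j)))) + Eb
        + (int (degree (a (r + t + 1))) + int (degree (b (s'_of s t))) - int (degree (a (r + t + 1) - b (s'_of s t)))))"
        using caseII[OF True lm] by blast
      have I: "2 * (\<Sum>j = 1..t. int (degree (a (r + j)))) + Eb
        + (int (degree (a (r + t + 1))) + int (degree (b (s'_of s t))) - int (degree (a (r + t + 1) - b (s'_of s t))))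
         = 2 * (\<Sum>j = 1..t. int (degree (a (r + j)))) + int (min (degree (a r)) (degree (b s)))
              + int (min (degree (a (r + t + 1))) (degree (b s')))"
        using m2 Ebm[OF d1] ss by simp
      from L show ?thesis by (simp only: I)
    qed
  qed
  have qq: "real (CARD('a)) = q" unfolding q_def ..
  have G1: "a (r + 1) \<noteq> b 1 \<longrightarrow>
        - log (real (CARD('a))) \<rho> =
          real_of_int (int (degree (a r)) + int (degree (b s)) - int (degree (a r - b s))
            + int (degree (a (r + 1))) + int (degree (b 1)) - int (degree (a (r + 1) - b 1)))"
  proof
    assume h: "a (r + 1) \<noteq> b 1"
    have L: "- log q \<rho> = real_of_int (Eb + (int (degree (a (r + 1))) + int (degree (b 1)) - int (degree (a (r + 1) - b 1))))"
      using caseI[OF h] by blast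
    have I: "Eb + (int (degree (a (r + 1))) + int (degree (b 1)) - int (degree (a (r + 1) - b 1)))
      = int (degree (a r)) + int (degree (b s)) - int (degree (a r - b s))
            + int (degree (a (r + 1))) + int (degree (b 1)) - int (degree (a (r + 1) - b 1))"
      unfolding Eb_def by simp
    from L show "- log (real (CARD('a))) \<rho> =
          real_of_int (int (degree (a r)) + int (degree (b s)) - int (degree (a r - b s))
            + int (degree (a (r + 1))) + int (degree (b 1)) - int (degree (a (r + 1) - b 1)))"
      by (simp only: I qq)
  qed
  have G2: "a (r + 1) = b 1 \<longrightarrow>
        (\<exists>t. largest_match a b s r t) \<and>
        (\<forall>t. largest_match a b s r t \<longrightarrow>
          - log (real (CARD('a))) \<rho> =
            real_of_int (2 * (\<Sum>j = 1..t. int (degree (a (r + j))))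
              + int (degree (a r)) + int (degree (b s)) - int (degree (a r - b s))
              + int (degree (a (r + t + 1))) + int (degree (b (s'_of s t)))
              - int (degree (a (r + t + 1) - b (s'_of s t)))))"
  proof (intro impI conjI allI)
    assume h: "a (r + 1) = b 1"
    show "\<exists>t. largest_match a b s r t" using exII[OF h] .
    fix t assume lm: "largest_match a b s r t"
    have L: "- log q \<rho> = real_of_int (2 * (\<Sum>j = 1..t. int (degree (a (r + j)))) + Eb
        + (int (degree (a (r + t + 1))) + int (degree (b (s'_of s t))) - int (degree (a (r + t + 1) - b (s'_of s t)))))"
      using caseII[OF h lm] by blast
    have I: "2 * (\<Sum>j = 1..t. int (degree (a (r + j)))) + Eb
        + (int (degree (a (r + t + 1))) + int (degree (b (s'_of s t))) - int (degree (a (r + t + 1) - b (s'_of s t))))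
      = 2 * (\<Sum>j = 1..t. int (degree (a (r + j))))
              + int (degree (a r)) + int (degree (b s)) - int (degree (a r - b s))
              + int (degree (a (r + t + 1))) + int (degree (b (s'_of s t)))
              - int (degree (a (r + t + 1) - b (s'_of s t)))"
      unfolding Eb_def by simp
    from L show "- log (real (CARD('a))) \<rho> =
            real_of_int (2 * (\<Sum>j = 1..t. int (degree (a (r + j))))
              + int (degree (a r)) + int (degree (b s)) - int (degree (a r - b s))
              + int (degree (a (r + t + 1))) + int (degree (b (s'_of s t)))
              - int (degree (a (r + t + 1) - b (s'_of s t))))"
      by (simp only: I qq)
  qed
  have G3: "\<rho> \<le> real (CARD('a)) powr (-2)" using part3 by (simp only: qq)
  have G4: "\<forall>t s'. ((a (r + 1) \<noteq> b 1 \<and> t = 0 \<and> s' = 1) \<or>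
                (a (r + 1) = b 1 \<and> largest_match a b s r t \<and> s' = s'_of s t)) \<longrightarrow>
          degree (a r) \<noteq> degree (b s) \<longrightarrow>
          degree (a (r + t + 1)) \<noteq> degree (b s') \<longrightarrow>
          - log (real (CARD('a))) \<rho> =
            real_of_int (2 * (\<Sum>j = 1..t. int (degree (a (r + j))))
              + int (min (degree (a r)) (degree (b s)))
              + int (min (degree (a (r + t + 1))) (degree (b s'))))"
    using part4 by (simp only: qq) blast
  show ?thesis using G1 G2 G3 G4 by (intro conjI)
qed

end
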